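(* Let $\pi:\mathfrak H\to\mathfrak H/\mathcal I\cong\Lambda$ be the augmentation. Then $\pi(\mathrm{Fitt}_{\mathfrak H}(\mathcal I))=\mathrm{Fitt}_\Lambda(I/I^2)\subseteq(\xi)$ as ideals of $\Lambda$.
   Context: Fix a prime $p\ge5$, an integer $N\ge1$ with $p\nmid N\varphi(N)$, $\omega$ the Teichmüller character, $\theta$ an even character of $(\mathbb Z/Np\mathbb Z)^\times$ with $\chi=\omega^{-1}\theta$, satisfying: (a) $\theta$ primitive of modulus $Np$; (b) if $\chi|_{(\mathbb Z/p)^\times}=1$ then $\chi|_{(\mathbb Z/N)^\times}(p)\ne1$; (c) if $N=1$ then $\theta\ne\omega^2$. $\Lambda=\mathbb Z_p[[\mathbb Z_{p,N}^\times]]_\theta$ with $\mathbb Z_{p,N}=\varprojlim\mathbb Z/Np^r$ (the component on which $(\mathbb Z/Np\mathbb Z)^\times$ acts via $\theta$). $X=\varprojlim_r\mathrm{Cl}(\mathbb Q(\zeta_{Np^r}))[p^\infty]$ as a module over $\mathbb Z_p[[\mathbb Z_{p,N}^\times]]\cong\mathbb Z_p[[\mathrm{Gal}(\mathbb Q(\zeta_{Np^\infty})/\mathbb Q)]]$; $X_\chi(1)$ is its $\chi$-eigenspace with $\gamma$ acting as $\kappa(\gamma)\gamma$ ($\kappa$ the cyclotomic character), a torsion $\Lambda$-module, and $\xi=\xi_\chi\in\Lambda$ generates its characteristic ideal. Hecke setup: $\mathfrak H$ (resp. $\mathfrak h$) is the localization at the Eisenstein maximal ideal of Hida's ordinary Hecke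 algebra acting on $\varprojlim_rH^1(Y_1(Np^r),\mathbb Z_p)^{\mathrm{ord}}_\theta$ (resp. $\varprojlim_rH^1(X_1(Np^r),\mathbb Z_p)^{\mathrm{ord}}_\theta$), where the subscript $\theta$ is the eigenspace for the diamond operators; $\mathcal I\subset\mathfrak H$ is the Eisenstein ideal and $I\subset\mathfrak h$ its image. Known facts used as standing input: $\mathfrak H,\mathfrak h$ are finite flat $\Lambda$-algebras; $\mathfrak H/\mathcal I\cong\Lambda$; $\mathfrak h/I\cong\Lambda/\xi$; the natural map $\mathcal I\to I$ is an isomorphism of $\mathfrak H$-modules; $I$ is a faithful $\mathfrak h$-module. $\mathrm{Fitt}$ denotes the (zeroth) Fitting ideal. *)

theory Defs
  imports "Jordan_Normal_Form.Determinant"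
begin

definition is_ring_hom :: "('r::comm_ring_1 \<Rightarrow> 's::comm_ring_1) \<Rightarrow> bool" where
  "is_ring_hom f \<longleftrightarrow> f 1 = 1 \<and> (\<forall>x y. f (x + y) = f x + f y) \<and> (\<forall>x y. f (x * y) = f x * f y)"

definition gen_ideal :: "'r::comm_ring_1 set \<Rightarrow> 'r set" where
  "gen_ideal D = {x. \<exists>(k::nat) (c::nat \<Rightarrow> 'r) d. (\<forall>i<k. d i \<in> D) \<and> x = (\<Sum>i<k. c i * d i)}"

definition ideal_sq :: "'r::comm_ring_1 set \<Rightarrow> 'r set" where
  "ideal_sq J = gen_ideal {x * y | x y. x \<in> J \<and> y \<in> J}"

text \<open>Modules are given concretely as a quotient M/N of subgroups N \<subseteq> M of an abelian
  group 'm, with scalar action act of the ring 'r.  Elements of M/N are represented by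
  elements of M, and equality in M/N means difference in N.\<close>
definition lin_comb :: "('r \<Rightarrow> 'm::ab_group_add \<Rightarrow> 'm) \<Rightarrow> nat \<Rightarrow> (nat \<Rightarrow> 'r) \<Rightarrow> (nat \<Rightarrow> 'm) \<Rightarrow> 'm" where
  "lin_comb act n c g = (\<Sum>i<n. act (c i) (g i))"

definition generates :: "('r \<Rightarrow> 'm::ab_group_add \<Rightarrow> 'm) \<Rightarrow> 'm set \<Rightarrow> 'm set \<Rightarrow> nat \<Rightarrow> (nat \<Rightarrow> 'm) \<Rightarrow> bool" where
  "generates act M N n g \<longleftrightarrow> (\<forall>i<n. g i \<in> M) \<and> (\<forall>x\<in>M. \<exists>c. x - lin_comb act n c g \<in> N)"

definition fin_gen :: "('r \<Rightarrow> 'm::ab_group_add \<Rightarrow> 'm) \<Rightarrow> 'm set \<Rightarrow> 'm set \<Rightarrow> bool" where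
  "fin_gen act M N \<longleftrightarrow> (\<exists>n g. generates act M N n g)"

text \<open>Relation vectors of the generators g_0..g_{n-1} (only the first n coordinates matter).\<close>
definition relations :: "('r \<Rightarrow> 'm::ab_group_add \<Rightarrow> 'm) \<Rightarrow> 'm set \<Rightarrow> nat \<Rightarrow> (nat \<Rightarrow> 'm) \<Rightarrow> (nat \<Rightarrow> 'r) set" where
  "relations act N n g = {c. lin_comb act n c g \<in> N}"

text \<open>Zeroth Fitting ideal w.r.t. a chosen generating family: the ideal generated by the
  n x n minors of the relation matrix, i.e. determinants of n x n matrices whose rows are
  relation vectors.\<close>
definition fitting_wrt :: "('r::comm_ring_1 \<Rightarrow> 'm::ab_group_add \<Rightarrow> 'm) \<Rightarrow> 'm set \<Rightarrow> nat \<Rightarrow> (nat \<Rightarrow> 'm) \<Rightarrow> 'r set" where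
  "fitting_wrt act N n g = gen_ideal
     {det (mat n n (\<lambda>(i, j). rows i j)) | rows. \<forall>i<n. rows i \<in> relations act N n g}"

text \<open>Zeroth Fitting ideal of the finitely generated module M/N (independent of the choice
  of generators; here a generating family is chosen).\<close>
definition fitting_ideal :: "('r::comm_ring_1 \<Rightarrow> 'm::ab_group_add \<Rightarrow> 'm) \<Rightarrow> 'm set \<Rightarrow> 'm set \<Rightarrow> 'r set" where
  "fitting_ideal act M N =
     (let ng = (SOME ng. generates act M N (fst ng) (snd ng)) in fitting_wrt act N (fst ng) (snd ng))"

end

theory Submission
  imports Defs
begin


lemma gi_0: "0 \<in> gen_ideal D"
  unfolding gen_ideal_def by (rule CollectI, rule exI[of _ 0], auto)

lemma gi_base: "d \<in> D \<Longrightarrow> d \<in> gen_ideal D"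
  unfolding gen_ideal_def
  by (rule CollectI, rule exI[of _ 1], rule exI[of _ "\<lambda>_. 1"], rule exI[of _ "\<lambda>_. d"], auto)

lemma gi_mult: "x \<in> gen_ideal D \<Longrightarrow> a * x \<in> gen_ideal D"
proof -
  assume "x \<in> gen_ideal D"
  then obtain k :: nat and c d where "\<forall>i<k. d i \<in> D" "x = (\<Sum>i<k. c i * d i)" unfolding gen_ideal_def mem_Collect_eq by blast
  then show ?thesis unfolding gen_ideal_def
    by (intro CollectI exI[of _ k] exI[of _ "\<lambda>i. a * c i"] exI[of _ d])
      (auto simp: sum_distrib_left mult.assoc)
qed

lemma gi_add: "x \<in> gen_ideal D \<Longrightarrow> y \<in> gen_ideal D \<Longrightarrow> x + y \<in> gen_ideal D"
proof -
  assume "x \<in> gen_ideal D" "y \<in> gen_ideal D"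
  then obtain k k2 :: nat and c d c2 d2 where h: "\<forall>i<k. d i \<in> D" "x = (\<Sum>i<k. c i * d i)"
     "\<forall>i<k2. d2 i \<in> D" "y = (\<Sum>i<k2. c2 i * d2 i)" unfolding gen_ideal_def mem_Collect_eq by blast
  define C where "C = (\<lambda>i. if i < k then c i else c2 (i - k))"
  define E where "E = (\<lambda>i. if i < k then d i else d2 (i - k))"
  have s: "(\<Sum>i<k+k2. C i * E i) = (\<Sum>i<k. C i * E i) + (\<Sum>i<k2. C (k+i) * E (k+i))"
  proof (induction k2)
    case 0 then show ?case by simp
  next
    case (Suc k2) then show ?case by (simp add: add.assoc)
  qed
  have "x + y = (\<Sum>i<k. C i * E i) + (\<Sum>i<k2. C (k+i) * E (k+i))" by (simp add: h C_def E_def)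
  then have "x + y = (\<Sum>i<k+k2. C i * E i)" using s by simp
  moreover have "\<forall>i<k+k2. E i \<in> D" using h unfolding E_def by auto
  ultimately show ?thesis unfolding gen_ideal_def by blast
qed

lemma gi_uminus: "x \<in> gen_ideal D \<Longrightarrow> - x \<in> gen_ideal D"
  using gi_mult[of x D "-1"] by simp

lemma gi_diff: "x \<in> gen_ideal D \<Longrightarrow> y \<in> gen_ideal D \<Longrightarrow> x - y \<in> gen_ideal D"
  using gi_add[OF _ gi_uminus] by (metis diff_conv_add_uminus)

lemma gi_sum: "(\<And>i. i \<in> S \<Longrightarrow> f i \<in> gen_ideal D) \<Longrightarrow> sum f S \<in> gen_ideal D"
proof (induction S rule: infinite_finite_induct)
  case (infinite A) then show ?case by (simp add: gi_0)
next
  case empty then show ?case by (simp add: gi_0)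
next
  case (insert x F) then show ?case by (simp add: gi_add)
qed

lemma gi_sub: "(\<And>d. d \<in> D \<Longrightarrow> d \<in> gen_ideal E) \<Longrightarrow> gen_ideal D \<subseteq> gen_ideal E"
proof
  fix x assume h: "\<And>d. d \<in> D \<Longrightarrow> d \<in> gen_ideal E" and xD: "x \<in> gen_ideal D"
  from xD obtain k :: nat and c d where dd: "\<forall>i<k. d i \<in> D" and xx: "x = (\<Sum>i<k. c i * d i)" unfolding gen_ideal_def mem_Collect_eq by blast
  show "x \<in> gen_ideal E" unfolding xx
    by (rule gi_sum, rule gi_mult, rule h) (use dd in auto)
qed

lemma ring_hom_crh: "is_ring_hom f \<Longrightarrow> comm_ring_hom f"
proof -
  assume h: "is_ring_hom f"
  have z: "f 0 = 0" using h unfolding is_ring_hom_def by (metis add.right_neutral add_left_cancel)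
  show ?thesis using h z unfolding is_ring_hom_def
    by unfold_locales auto
qed




lemma rel_cong: "(\<And>i. i < n \<Longrightarrow> g i = g' i) \<Longrightarrow> relations act N n g = relations act N n g'"
proof -
  assume h: "\<And>i. i < n \<Longrightarrow> g i = g' i"
  have "(\<Sum>i<n. act (r i) (g i)) = (\<Sum>i<n. act (r i) (g' i))" for r
    by (rule sum.cong) (auto simp: h)
  then show ?thesis unfolding relations_def lin_comb_def by auto
qed

lemma fw_cong: "(\<And>i. i < n \<Longrightarrow> g i = g' i) \<Longrightarrow> fitting_wrt act N n g = fitting_wrt act N n g'"
  unfolding fitting_wrt_def using rel_cong[of n g g' act N] by simp

lemma fw_perm_sub:
  fixes act :: "'r::comm_ring_1 \<Rightarrow> 'm::ab_group_add \<Rightarrow> 'm"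
  assumes p: "p permutes {0..<n}"
  shows "fitting_wrt act N n (g \<circ> p) \<subseteq> fitting_wrt act N n g"
  unfolding fitting_wrt_def
proof (rule gi_sub)
  fix d assume "d \<in> {det (mat n n (\<lambda>(i, j). rows i j)) |rows. \<forall>i<n. rows i \<in> relations act N n (g \<circ> p)}"
  then obtain R where d: "d = det (mat n n (\<lambda>(i, j). R i j))" and R: "\<forall>i<n. R i \<in> relations act N n (g \<circ> p)"
    by blast
  define R' where "R' = (\<lambda>i j. R i (inv_into UNIV p j))"
  have lc: "lin_comb act n r (g \<circ> p) = lin_comb act n (r \<circ> inv_into UNIV p) g" for r
  proof -
    have "lin_comb act n (r \<circ> inv_into UNIV p) g = (\<Sum>j\<in>{0..<n}. act (r (inv_into UNIV p j)) (g j))"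
      unfolding lin_comb_def by (simp add: atLeast0LessThan)
    also have "\<dots> = (\<Sum>j\<in>{0..<n}. act (r (inv_into UNIV p (p j))) (g (p j)))"
      using sum.permute[OF p, of "\<lambda>j. act (r (inv_into UNIV p j)) (g j)"] by (simp add: o_def)
    also have "\<dots> = lin_comb act n r (g \<circ> p)"
      unfolding lin_comb_def by (simp add: atLeast0LessThan permutes_inverses[OF p])
    finally show ?thesis by simp
  qed
  have R': "\<forall>i<n. R' i \<in> relations act N n g"
    using R unfolding relations_def R'_def lc by (auto simp: o_def)
  define A where "A = mat n n (\<lambda>(i, j). R' i j)"
  have A: "A \<in> carrier_mat n n" unfolding A_def by simp
  have AT: "transpose_mat A \<in> carrier_mat n n" using A by simp
  have pj: "p j < n" if "j < n" for j using permutes_in_image[OF p, of j] that by simp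
  have "mat n n (\<lambda>(i, j). R i j) = transpose_mat (mat n n (\<lambda>(i, j). transpose_mat A $$ (p i, j)))"
    by (rule eq_matI) (auto simp: A_def R'_def permutes_inverses[OF p] pj)
  then have "d = signof p * det A"
    unfolding d using det_transpose[of "mat n n (\<lambda>(i, j). transpose_mat A $$ (p i, j))" n]
      det_permute_rows[OF AT p] det_transpose[OF A] by simp
  moreover have "det A \<in> gen_ideal {det (mat n n (\<lambda>(i, j). rows i j)) |rows. \<forall>i<n. rows i \<in> relations act N n g}"
    unfolding A_def using R' by (intro gi_base) blast
  ultimately show "d \<in> gen_ideal {det (mat n n (\<lambda>(i, j). rows i j)) |rows. \<forall>i<n. rows i \<in> relations act N n g}"
    using gi_mult by simp
qed

lemma fw_perm:
  fixes act :: "'r::comm_ring_1 \<Rightarrow> 'm::ab_group_add \<Rightarrow> 'm"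
  assumes p: "p permutes {0..<n}"
  shows "fitting_wrt act N n (g \<circ> p) = fitting_wrt act N n g"
proof
  show "fitting_wrt act N n (g \<circ> p) \<subseteq> fitting_wrt act N n g" by (rule fw_perm_sub[OF p])
  have "fitting_wrt act N n g = fitting_wrt act N n ((g \<circ> p) \<circ> inv_into UNIV p)"
    by (rule fw_cong) (simp add: permutes_inverses[OF p])
  also have "\<dots> \<subseteq> fitting_wrt act N n (g \<circ> p)" by (rule fw_perm_sub[OF permutes_inv[OF p]])
  finally show "fitting_wrt act N n g \<subseteq> fitting_wrt act N n (g \<circ> p)" .
qed




lemma lc_Suc_upd:
  "lin_comb (\<lambda>l x. f l * x) (Suc n) r (g(n:=y)) = lin_comb (\<lambda>l x. f l * x) n r g + f (r n) * y"
proof -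
  have "(\<Sum>i<n. f (r i) * (g(n:=y)) i) = (\<Sum>i<n. f (r i) * g i)" by (rule sum.cong) auto
  then show ?thesis unfolding lin_comb_def by simp
qed

lemma prod_list_map_1: "prod_list (map (\<lambda>_. 1::'a::monoid_mult) xs) = 1"
  by (induction xs) auto

lemma fw_append:
  fixes f :: "'r::comm_ring_1 \<Rightarrow> 'b::comm_ring_1"
  assumes f: "comm_ring_hom f" and N0: "0 \<in> N"
    and Nadd: "\<And>x z. x \<in> N \<Longrightarrow> z \<in> N \<Longrightarrow> x + z \<in> N"
    and Nmul: "\<And>a x. x \<in> N \<Longrightarrow> a * x \<in> N"
    and y: "y - lin_comb (\<lambda>l x. f l * x) n c g \<in> N"
  shows "fitting_wrt (\<lambda>l x. f l * x) N (Suc n) (g(n:=y)) = fitting_wrt (\<lambda>l x. f l * x) N n g"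
proof -
  interpret comm_ring_hom f by (rule f)
  let ?act = "\<lambda>l x. f l * x"
  let ?D = "{det (mat n n (\<lambda>(i, j). rows i j)) |rows. \<forall>i<n. rows i \<in> relations ?act N n g}"
  let ?D' = "{det (mat (Suc n) (Suc n) (\<lambda>(i, j). rows i j)) |rows. \<forall>i<Suc n. rows i \<in> relations ?act N (Suc n) (g(n:=y))}"
  have lcS: "lin_comb ?act (Suc n) r (g(n:=y)) = lin_comb ?act n r g + f (r n) * y" for r
    by (rule lc_Suc_upd)
  have lc_add: "lin_comb ?act n (\<lambda>j. r j + a * c j) g = lin_comb ?act n r g + f a * lin_comb ?act n c g" for r a
    unfolding lin_comb_def by (simp add: hom_distribs sum.distrib sum_distrib_left algebra_simps)
  have lc_neg: "lin_comb ?act n (\<lambda>j. - c j) g = - lin_comb ?act n c g"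
    unfolding lin_comb_def by (simp add: hom_distribs sum_negf)
  have lc0: "lin_comb ?act n (\<lambda>j. if j < n then r j else z) g = lin_comb ?act n r g" for r z
    unfolding lin_comb_def by (rule sum.cong) auto
  have Nsub: "x - a * z \<in> N" if "x \<in> N" "z \<in> N" for x z a
    using Nadd[OF that(1) Nmul[OF that(2), of "-a"]] by simp
  show ?thesis
  proof
    show "fitting_wrt ?act N n g \<subseteq> fitting_wrt ?act N (Suc n) (g(n:=y))"
      unfolding fitting_wrt_def
    proof (rule gi_sub)
      fix d assume "d \<in> ?D"
      then obtain R where d: "d = det (mat n n (\<lambda>(i, j). R i j))" and R: "\<forall>i<n. R i \<in> relations ?act N n g"
        by blast
      define R' where "R' = (\<lambda>i j. if i < n then (if j < n then R i j else 0) else (if j < n then - c j else 1))"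
      have R': "\<forall>i<Suc n. R' i \<in> relations ?act N (Suc n) (g(n:=y))"
      proof (intro allI impI)
        fix i assume i: "i < Suc n"
        show "R' i \<in> relations ?act N (Suc n) (g(n:=y))"
        proof (cases "i < n")
          case True
          have "lin_comb ?act (Suc n) (R' i) (g(n:=y)) = lin_comb ?act n (R i) g"
            unfolding lcS using lc0[of "R i"] True by (simp add: R'_def)
          then show ?thesis using R True unfolding relations_def by simp
        next
          case False
          have "lin_comb ?act (Suc n) (R' i) (g(n:=y)) = y - lin_comb ?act n c g"
            unfolding lcS using lc0[of "\<lambda>j. - c j" 1] False lc_neg by (simp add: R'_def)
          then show ?thesis using y unfolding relations_def by simp
        qed
      qed
      define A where "A = mat (Suc n) (Suc n) (\<lambda>(i, j). R' i j)"
      have A: "A \<in> carrier_mat (Suc n) (Suc n)" unfolding A_def by simp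
      have "det A = (\<Sum>i<Suc n. A $$ (i,n) * cofactor A i n)"
        by (rule laplace_expansion_column[OF A]) simp
      also have "\<dots> = A $$ (n,n) * cofactor A n n"
        by (simp add: A_def R'_def)
      also have "\<dots> = det (mat_delete A n n)"
        by (simp add: A_def R'_def cofactor_def)
      also have "mat_delete A n n = mat n n (\<lambda>(i, j). R i j)"
        by (rule eq_matI) (auto simp: mat_delete_def A_def R'_def)
      finally have "d = det A" using d by simp
      then show "d \<in> gen_ideal ?D'" using R' unfolding A_def by (intro gi_base) blast
    qed
  next
    show "fitting_wrt ?act N (Suc n) (g(n:=y)) \<subseteq> fitting_wrt ?act N n g"
      unfolding fitting_wrt_def
    proof (rule gi_sub)
      fix d assume "d \<in> ?D'"
      then obtain R' where d: "d = det (mat (Suc n) (Suc n) (\<lambda>(i, j). R' i j))"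
        and R': "\<forall>i<Suc n. R' i \<in> relations ?act N (Suc n) (g(n:=y))"
        by blast
      define A where "A = mat (Suc n) (Suc n) (\<lambda>(i, j). R' i j)"
      have A: "A \<in> carrier_mat (Suc n) (Suc n)" unfolding A_def by simp
      define E where "E = mat (Suc n) (Suc n) (\<lambda>(k, j). (if k = j then 1 else 0) + (if k = n \<and> j < n then c j else 0))"
      have E: "E \<in> carrier_mat (Suc n) (Suc n)" unfolding E_def by simp
      have detE: "det E = 1"
      proof -
        have "det E = prod_list (diag_mat E)"
          by (rule det_lower_triangular[OF _ E]) (auto simp: E_def)
        also have "diag_mat E = map (\<lambda>_. 1) [0..<Suc n]" unfolding diag_mat_def
          by (rule map_cong) (auto simp: E_def)
        finally show ?thesis by (simp only: prod_list_map_1)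
      qed
      have dummy: True by simp
      define S where "S = (\<lambda>k j. R' k j + R' k n * c j)"
      define B where "B = mat (Suc n) (Suc n) (\<lambda>(i, j). if j < n then S i j else R' i n)"
      have B: "B \<in> carrier_mat (Suc n) (Suc n)" unfolding B_def by simp
      have "A * E = B"
      proof (rule eq_matI)
        fix i j assume ij: "i < dim_row B" "j < dim_col B"
        then have i: "i < Suc n" and j: "j < Suc n" unfolding B_def by auto
        have "(A * E) $$ (i, j) = (\<Sum>k<Suc n. A $$ (i,k) * E $$ (k,j))"
          using A E i j by (simp add: scalar_prod_def atLeast0LessThan lessThan_Suc_eq_insert_0 sum.reindex)
        also have "\<dots> = (\<Sum>k<Suc n. A $$ (i,k) * (if k = j then 1 else 0))
                        + (\<Sum>k<Suc n. A $$ (i,k) * (if k = n \<and> j < n then c j else 0))"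
          unfolding sum.distrib[symmetric] using j by (intro sum.cong) (auto simp: E_def algebra_simps)
        also have "\<dots> = A $$ (i,j) + (if j < n then A $$ (i,n) * c j else 0)"
          using j by (simp add: if_distrib[of "\<lambda>x. _ * x"] sum.delta' cong: if_cong)
        also have "\<dots> = B $$ (i, j)"
          using i j by (cases "j < n") (auto simp: A_def B_def S_def less_Suc_eq)
        finally show "(A * E) $$ (i, j) = B $$ (i, j)" .
      qed (use A E B in auto)
      then have "det B = det A" using det_mult[OF A E] detE by simp
      also have "det B = (\<Sum>i<Suc n. B $$ (i,n) * cofactor B i n)"
        by (rule laplace_expansion_column[OF B]) simp
      finally have dB: "d = (\<Sum>i<Suc n. B $$ (i,n) * cofactor B i n)" using d A_def by simp
      have Srel: "S k \<in> relations ?act N n g" if k: "k < Suc n" for k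
      proof -
        have "lin_comb ?act (Suc n) (R' k) (g(n:=y)) \<in> N" using R' k unfolding relations_def by auto
        then have "lin_comb ?act n (R' k) g + f (R' k n) * y \<in> N" by (simp add: lcS)
        note N1 = Nsub[OF this y, of "f (R' k n)"]
        have e1: "lin_comb ?act n (S k) g = lin_comb ?act n (R' k) g + f (R' k n) * lin_comb ?act n c g"
          unfolding S_def by (rule lc_add)
        have e2: "X + a * yy - a * (yy - L) = X + a * L" for X a yy L :: 'b by (simp add: algebra_simps)
        show ?thesis using N1 unfolding relations_def mem_Collect_eq e1 by (metis e2)
      qed
      show "d \<in> gen_ideal ?D"
        unfolding dB
      proof (rule gi_sum, rule gi_mult)
        fix i assume i: "i \<in> {..<Suc n}"
        define T where "T = (\<lambda>i' j. S (if i' < i then i' else Suc i') j)"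
        have "mat_delete B i n = mat n n (\<lambda>(i', j). T i' j)"
          by (rule eq_matI) (auto simp: mat_delete_def B_def T_def)
        moreover have "\<forall>i'<n. T i' \<in> relations ?act N n g"
          unfolding T_def using Srel by auto
        ultimately have "det (mat_delete B i n) \<in> gen_ideal ?D" by (intro gi_base) auto
        then show "cofactor B i n \<in> gen_ideal ?D" unfolding cofactor_def by (rule gi_mult)
      qed
    qed
  qed
qed




definition cat :: "(nat \<Rightarrow> 'a) \<Rightarrow> nat \<Rightarrow> (nat \<Rightarrow> 'a) \<Rightarrow> nat \<Rightarrow> 'a" where
  "cat a k b = (\<lambda>i. if i < k then a i else b (i - k))"

lemma lc_ext:
  fixes f :: "'r::comm_ring_1 \<Rightarrow> 'b::comm_ring_1"
  assumes f: "comm_ring_hom f" and G: "\<And>i. i < n \<Longrightarrow> G i = g i"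
  shows "lin_comb (\<lambda>l x. f l * x) (n + k) (\<lambda>i. if i < n then c i else 0) G = lin_comb (\<lambda>l x. f l * x) n c g"
proof -
  interpret comm_ring_hom f by (rule f)
  have "(\<Sum>i<n + k. f (if i < n then c i else 0) * G i) = (\<Sum>i<n. f (if i < n then c i else 0) * G i)"
  proof (induction k)
    case (Suc k) then show ?case by simp
  qed simp
  also have "\<dots> = (\<Sum>i<n. f (c i) * g i)" by (rule sum.cong) (auto simp: G)
  finally show ?thesis unfolding lin_comb_def .
qed

lemma fw_cat_step:
  fixes f :: "'r::comm_ring_1 \<Rightarrow> 'b::comm_ring_1"
  assumes f: "comm_ring_hom f" and N0: "0 \<in> N"
    and Nadd: "\<And>x z. x \<in> N \<Longrightarrow> z \<in> N \<Longrightarrow> x + z \<in> N"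
    and Nmul: "\<And>a x. x \<in> N \<Longrightarrow> a * x \<in> N"
    and hg: "\<And>j. j < m \<Longrightarrow> \<exists>c. h j - lin_comb (\<lambda>l x. f l * x) n c g \<in> N"
  shows "k \<le> m \<Longrightarrow> fitting_wrt (\<lambda>l x. f l * x) N (n + k) (cat g n h) = fitting_wrt (\<lambda>l x. f l * x) N n g"
proof (induction k)
  case 0 show ?case unfolding add_0_right by (intro fw_cong) (simp add: cat_def)
next
  case (Suc k)
  then have k: "k < m" by simp
  obtain c where c: "h k - lin_comb (\<lambda>l x. f l * x) n c g \<in> N" using hg[OF k] by blast
  have lc: "lin_comb (\<lambda>l x. f l * x) (n + k) (\<lambda>i. if i < n then c i else 0) (cat g n h) = lin_comb (\<lambda>l x. f l * x) n c g"
    by (rule lc_ext[OF f]) (simp add: cat_def)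
  have "fitting_wrt (\<lambda>l x. f l * x) N (n + Suc k) (cat g n h)
      = fitting_wrt (\<lambda>l x. f l * x) N (Suc (n + k)) ((cat g n h)(n + k := h k))"
    unfolding add_Suc_right by (intro fw_cong) (auto simp: cat_def)
  also have "\<dots> = fitting_wrt (\<lambda>l x. f l * x) N (n + k) (cat g n h)"
    by (rule fw_append[where c="\<lambda>i. if i < n then c i else 0"])
       (rule f, rule N0, erule (1) Nadd, erule Nmul, simp only: lc c)
  also have "\<dots> = fitting_wrt (\<lambda>l x. f l * x) N n g" using Suc k by simp
  finally show ?case .
qed

lemma fw_indep:
  fixes f :: "'r::comm_ring_1 \<Rightarrow> 'b::comm_ring_1"
  assumes f: "comm_ring_hom f" and N0: "0 \<in> N"
    and Nadd: "\<And>x z. x \<in> N \<Longrightarrow> z \<in> N \<Longrightarrow> x + z \<in> N"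
    and Nmul: "\<And>a x. x \<in> N \<Longrightarrow> a * x \<in> N"
    and gg: "generates (\<lambda>l x. f l * x) M N n g"
    and hh: "generates (\<lambda>l x. f l * x) M N m h"
  shows "fitting_wrt (\<lambda>l x. f l * x) N n g = fitting_wrt (\<lambda>l x. f l * x) N m h"
proof -
  have hg: "\<exists>c. h j - lin_comb (\<lambda>l x. f l * x) n c g \<in> N" if "j < m" for j
    using gg hh that unfolding generates_def by blast
  have gh: "\<exists>c. g j - lin_comb (\<lambda>l x. f l * x) m c h \<in> N" if "j < n" for j
    using gg hh that unfolding generates_def by blast
  have 1: "fitting_wrt (\<lambda>l x. f l * x) N (n + m) (cat g n h) = fitting_wrt (\<lambda>l x. f l * x) N n g"
    by (rule fw_cat_step[OF f N0 Nadd Nmul hg]) auto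
  have 2: "fitting_wrt (\<lambda>l x. f l * x) N (m + n) (cat h m g) = fitting_wrt (\<lambda>l x. f l * x) N m h"
    by (rule fw_cat_step[OF f N0 Nadd Nmul gh]) auto
  define \<sigma> where "\<sigma> = (\<lambda>i::nat. if i < m then i + n else if i < n + m then i - m else i)"
  define \<tau> where "\<tau> = (\<lambda>i::nat. if i < n then i + m else if i < n + m then i - n else i)"
  have p: "\<sigma> permutes {0..<n+m}"
  proof (rule bij_imp_permutes)
    show "bij_betw \<sigma> {0..<n + m} {0..<n + m}"
      by (rule bij_betw_byWitness[where f'=\<tau>]) (auto simp: \<sigma>_def \<tau>_def)
  qed (auto simp: \<sigma>_def)
  have "fitting_wrt (\<lambda>l x. f l * x) N (m + n) (cat h m g) = fitting_wrt (\<lambda>l x. f l * x) N (n + m) (cat g n h \<circ> \<sigma>)"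
    by (simp add: add.commute) (intro fw_cong, auto simp: cat_def \<sigma>_def)
  also have "\<dots> = fitting_wrt (\<lambda>l x. f l * x) N (n + m) (cat g n h)" by (rule fw_perm[OF p])
  finally show ?thesis using 1 2 by simp
qed




lemma gi_least:
  assumes "0 \<in> P" "\<And>x y. x \<in> P \<Longrightarrow> y \<in> P \<Longrightarrow> x + y \<in> P" "\<And>a x. x \<in> P \<Longrightarrow> a * x \<in> P" "D \<subseteq> P"
  shows "gen_ideal D \<subseteq> P"
proof
  fix x assume "x \<in> gen_ideal D"
  then obtain k :: nat and c d where dd: "\<forall>i<k. d i \<in> D" and xx: "x = (\<Sum>i<k. c i * d i)"
    unfolding gen_ideal_def mem_Collect_eq by blast
  have "(\<Sum>i<j. c i * d i) \<in> P" if "j \<le> k" for j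
    using that proof (induction j)
    case 0 then show ?case using assms(1) by simp
  next
    case (Suc j)
    then have "d j \<in> P" using assms(4) dd by auto
    then have "c j * d j \<in> P" by (rule assms(3))
    then show ?case using Suc assms(2) by simp
  qed
  then show "x \<in> P" using xx by simp
qed

lemma gi_hom_image:
  assumes f: "comm_ring_hom f" and D: "\<And>d. d \<in> D \<Longrightarrow> f d \<in> gen_ideal E"
  shows "f ` gen_ideal D \<subseteq> gen_ideal E"
proof
  interpret comm_ring_hom f by (rule f)
  fix y assume "y \<in> f ` gen_ideal D"
  then obtain x where y: "y = f x" and "x \<in> gen_ideal D" by blast
  then obtain k :: nat and c d where dd: "\<forall>i<k. d i \<in> D" and xx: "x = (\<Sum>i<k. c i * d i)"
    unfolding gen_ideal_def mem_Collect_eq by blast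
  have "y = (\<Sum>i<k. f (c i) * f (d i))" unfolding y xx by (simp add: hom_distribs)
  also have "\<dots> \<in> gen_ideal E" by (rule gi_sum, rule gi_mult, rule D) (use dd in auto)
  finally show "y \<in> gen_ideal E" .
qed

lemma fitting_ideal_some:
  assumes "generates act M N n g"
  shows "\<exists>n' g'. generates act M N n' g' \<and> fitting_ideal act M N = fitting_wrt act N n' g'"
proof -
  let ?ng = "SOME ng. generates act M N (fst ng) (snd ng)"
  have "generates act M N (fst ?ng) (snd ?ng)"
    by (rule someI[where x="(n, g)"]) (simp add: assms)
  then show ?thesis unfolding fitting_ideal_def Let_def by blast
qed




theorem mainTheorem6:
  fixes LamH :: "'l::comm_ring_1 \<Rightarrow> 'a::comm_ring_1"
    and Lamh :: "'l \<Rightarrow> 'b::comm_ring_1"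
    and \<phi> :: "'a \<Rightarrow> 'b"
    and aug :: "'a \<Rightarrow> 'l"
    and Ical :: "'a set" and I :: "'b set" and \<xi> :: 'l
  assumes hom_LamH: "is_ring_hom LamH"
    and hom_Lamh: "is_ring_hom Lamh"
    and hom_\<phi>: "is_ring_hom \<phi>"
    and surj_\<phi>: "surj \<phi>"
    and compat: "\<And>l. \<phi> (LamH l) = Lamh l"
    and hom_aug: "is_ring_hom aug"
    and aug_section: "\<And>l. aug (LamH l) = l"
    and Ical_def: "Ical = {x. aug x = 0}"
    and Ical_fg: "fin_gen (*) Ical {0}"
    and I_def: "I = \<phi> ` Ical"
    and iso: "inj_on \<phi> Ical"
    and quot_h: "\<And>l. Lamh l \<in> I \<longleftrightarrow> \<xi> dvd l"
    and quot_h_surj: "\<And>b. \<exists>l. b - Lamh l \<in> I"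
    and faithful: "\<And>b. (\<forall>x\<in>I. b * x = 0) \<Longrightarrow> b = 0"
  shows "aug ` fitting_ideal (*) Ical {0} = fitting_ideal (\<lambda>l x. Lamh l * x) I (ideal_sq I)
       \<and> fitting_ideal (\<lambda>l x. Lamh l * x) I (ideal_sq I) \<subseteq> {\<xi> * l | l. True}"
proof -
  interpret LH: comm_ring_hom LamH by (rule ring_hom_crh[OF hom_LamH])
  interpret Lh: comm_ring_hom Lamh by (rule ring_hom_crh[OF hom_Lamh])
  interpret P: comm_ring_hom \<phi> by (rule ring_hom_crh[OF hom_\<phi>])
  interpret A: comm_ring_hom aug by (rule ring_hom_crh[OF hom_aug])
  let ?actL = "\<lambda>l x. Lamh l * x"
  let ?I2 = "ideal_sq I"
  have Ic: "x \<in> Ical \<longleftrightarrow> aug x = 0" for x unfolding Ical_def by simp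
  have Ic_add: "x \<in> Ical \<Longrightarrow> y \<in> Ical \<Longrightarrow> x + y \<in> Ical" for x y by (simp add: Ic A.hom_add)
  have Ic_mul: "x \<in> Ical \<Longrightarrow> a * x \<in> Ical" for a x by (simp add: Ic A.hom_mult)
  have Ic_sum: "(\<And>i. i \<in> S \<Longrightarrow> h i \<in> Ical) \<Longrightarrow> sum h S \<in> Ical" for h and S :: "nat set"
    by (simp add: Ic A.hom_sum)
  have Ic_sec: "x - LamH (aug x) \<in> Ical" for x by (simp add: Ic A.hom_minus aug_section)
  
  from Ical_fg obtain n0 g0 where "generates (*) Ical {0} n0 g0" unfolding fin_gen_def by blast
  from fitting_ideal_some[OF this] obtain n g where gen: "generates (*) Ical {0} n g"
    and FH: "fitting_ideal (*) Ical {0} = fitting_wrt (*) {0} n g" by blast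
  have gI: "g i \<in> Ical" if "i < n" for i using gen that unfolding generates_def by blast
  have gexp: "\<exists>c. x = (\<Sum>i<n. c i * g i)" if "x \<in> Ical" for x
    using gen that unfolding generates_def lin_comb_def by auto
  
  define PP where "PP = {\<phi> (\<Sum>i<n. e i * g i) | e. \<forall>i<n. e i \<in> Ical}"
  have PPI: "(\<And>i. i < n \<Longrightarrow> e i \<in> Ical) \<Longrightarrow> \<phi> (\<Sum>i<n. e i * g i) \<in> PP" for e
    unfolding PP_def by blast
  have PP_add: "x \<in> PP \<Longrightarrow> y \<in> PP \<Longrightarrow> x + y \<in> PP" for x y
  proof -
    assume "x \<in> PP" "y \<in> PP"
    then obtain e1 e2 where "\<forall>i<n. e1 i \<in> Ical" "x = \<phi> (\<Sum>i<n. e1 i * g i)"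
      "\<forall>i<n. e2 i \<in> Ical" "y = \<phi> (\<Sum>i<n. e2 i * g i)" unfolding PP_def by blast
    then show "x + y \<in> PP" unfolding PP_def
      by (intro CollectI exI[of _ "\<lambda>i. e1 i + e2 i"]) (auto simp: P.hom_add[symmetric] sum.distrib algebra_simps Ic_add)
  qed
  have PP_mul: "x \<in> PP \<Longrightarrow> a * x \<in> PP" for x a
  proof -
    assume "x \<in> PP"
    then obtain e where e: "\<forall>i<n. e i \<in> Ical" "x = \<phi> (\<Sum>i<n. e i * g i)" unfolding PP_def by blast
    obtain A where a: "a = \<phi> A" using surj_\<phi> by (metis surj_def)
    have "a * x = \<phi> (\<Sum>i<n. (A * e i) * g i)" unfolding a e by (simp add: P.hom_mult[symmetric] sum_distrib_left mult.assoc)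
    moreover have "\<forall>i<n. A * e i \<in> Ical" using e Ic_mul by blast
    ultimately show "a * x \<in> PP" unfolding PP_def by (intro CollectI exI[of _ "\<lambda>i. A * e i"]) simp
  qed
  have PP0: "0 \<in> PP" unfolding PP_def by (intro CollectI exI[of _ "\<lambda>_. 0"]) (auto simp: Ic)
  have I2_PP: "?I2 \<subseteq> PP" unfolding ideal_sq_def
  proof (rule gi_least[OF PP0 PP_add PP_mul])
    show "{x * y |x y. x \<in> I \<and> y \<in> I} \<subseteq> PP"
    proof
      fix z assume "z \<in> {x * y |x y. x \<in> I \<and> y \<in> I}"
      then obtain A B where AB: "A \<in> Ical" "B \<in> Ical" "z = \<phi> A * \<phi> B" unfolding I_def by blast
      obtain c where c: "B = (\<Sum>i<n. c i * g i)" using gexp[OF AB(2)] by blast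
      have "z = \<phi> (\<Sum>i<n. (A * c i) * g i)" unfolding AB(3) c
        by (simp add: P.hom_mult[symmetric] sum_distrib_left mult.assoc)
      then show "z \<in> PP" unfolding PP_def using AB(1) Ic_mul by (auto simp: mult.commute)
    qed
  qed
  have PP_I2: "PP \<subseteq> ?I2"
  proof
    fix z assume "z \<in> PP"
    then obtain e where e: "\<forall>i<n. e i \<in> Ical" "z = \<phi> (\<Sum>i<n. e i * g i)" unfolding PP_def by blast
    have "z = (\<Sum>i<n. 1 * (\<phi> (e i) * \<phi> (g i)))" unfolding e by (simp add: P.hom_sum P.hom_mult)
    also have "\<dots> \<in> ?I2" unfolding ideal_sq_def
    proof (rule gi_sum, rule gi_mult, rule gi_base)
      fix i assume "i \<in> {..<n}"
      then have "\<phi> (e i) \<in> I" "\<phi> (g i) \<in> I" using e gI unfolding I_def by auto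
      then show "\<phi> (e i) * \<phi> (g i) \<in> {x * y |x y. x \<in> I \<and> y \<in> I}" by blast
    qed
    finally show "z \<in> ?I2" .
  qed
  have I2_eq: "?I2 = PP" using I2_PP PP_I2 by blast
  have I20: "0 \<in> ?I2" unfolding ideal_sq_def by (rule gi_0)
  have I2_add: "x \<in> ?I2 \<Longrightarrow> y \<in> ?I2 \<Longrightarrow> x + y \<in> ?I2" for x y unfolding ideal_sq_def by (rule gi_add)
  have I2_mul: "x \<in> ?I2 \<Longrightarrow> a * x \<in> ?I2" for x a unfolding ideal_sq_def by (rule gi_mult)
  
  have genL: "generates ?actL I ?I2 n (\<phi> \<circ> g)"
    unfolding generates_def
  proof (intro conjI ballI allI impI)
    fix i assume "i < n" then show "(\<phi> \<circ> g) i \<in> I" using gI unfolding I_def by auto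
  next
    fix x assume "x \<in> I"
    then obtain X where X: "X \<in> Ical" "x = \<phi> X" unfolding I_def by blast
    obtain c where c: "X = (\<Sum>i<n. c i * g i)" using gexp[OF X(1)] by blast
    have "x - lin_comb ?actL n (\<lambda>i. aug (c i)) (\<phi> \<circ> g) = \<phi> (\<Sum>i<n. (c i - LamH (aug (c i))) * g i)"
      unfolding X(2) c lin_comb_def
      by (simp add: P.hom_sum P.hom_mult P.hom_minus compat[symmetric] algebra_simps sum_subtractf)
    also have "\<dots> \<in> PP" unfolding PP_def using Ic_sec
      by (intro CollectI exI[of _ "\<lambda>i. c i - LamH (aug (c i))"]) simp
    finally show "\<exists>c. x - lin_comb ?actL n c (\<phi> \<circ> g) \<in> ?I2" using I2_eq by blast
  qed
  from fitting_ideal_some[OF genL] obtain m h where genh: "generates ?actL I ?I2 m h"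
    and FL': "fitting_ideal ?actL I ?I2 = fitting_wrt ?actL ?I2 m h" by blast
  have FL: "fitting_ideal ?actL I ?I2 = fitting_wrt ?actL ?I2 n (\<phi> \<circ> g)"
    unfolding FL' by (rule fw_indep[OF Lh.comm_ring_hom_axioms I20 I2_add I2_mul genh genL])
  
  have R1: "(\<lambda>i. aug (s i)) \<in> relations ?actL ?I2 n (\<phi> \<circ> g)" if s: "s \<in> relations (*) {0} n g" for s
  proof -
    have s0: "(\<Sum>i<n. s i * g i) = 0" using s unfolding relations_def lin_comb_def by simp
    have "lin_comb ?actL n (\<lambda>i. aug (s i)) (\<phi> \<circ> g) = \<phi> (\<Sum>i<n. LamH (aug (s i)) * g i)"
      unfolding lin_comb_def by (simp add: P.hom_sum P.hom_mult compat)
    also have "(\<Sum>i<n. LamH (aug (s i)) * g i) = (\<Sum>i<n. s i * g i) - (\<Sum>i<n. (s i - LamH (aug (s i))) * g i)"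
      by (simp add: sum_subtractf[symmetric] algebra_simps)
    also have "\<dots> = (\<Sum>i<n. (- (s i - LamH (aug (s i)))) * g i)" unfolding s0 by (simp add: sum_negf[symmetric] algebra_simps)
    finally have eqn: "lin_comb ?actL n (\<lambda>i. aug (s i)) (\<phi> \<circ> g) = \<phi> (\<Sum>i<n. (- (s i - LamH (aug (s i)))) * g i)" .
    have "\<forall>i<n. - (s i - LamH (aug (s i))) \<in> Ical" using Ic_sec Ic_mul[OF Ic_sec, of "-1"] by simp
    then have "lin_comb ?actL n (\<lambda>i. aug (s i)) (\<phi> \<circ> g) \<in> PP"
      unfolding eqn by (intro PPI) simp
    then show ?thesis unfolding relations_def I2_eq by simp
  qed
  have R2: "\<exists>s. s \<in> relations (*) {0} n g \<and> (\<forall>i<n. aug (s i) = r i)"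
    if r: "r \<in> relations ?actL ?I2 n (\<phi> \<circ> g)" for r
  proof -
    have "lin_comb ?actL n r (\<phi> \<circ> g) \<in> PP" using r I2_eq unfolding relations_def by simp
    then obtain e where e: "\<forall>i<n. e i \<in> Ical" "lin_comb ?actL n r (\<phi> \<circ> g) = \<phi> (\<Sum>i<n. e i * g i)"
      unfolding PP_def by blast
    define s where "s = (\<lambda>i. LamH (r i) - e i)"
    define D where "D = (\<Sum>i<n. s i * g i)"
    have DI: "D \<in> Ical" unfolding D_def by (rule Ic_sum, rule Ic_mul, rule gI) simp
    have "\<phi> D = lin_comb ?actL n r (\<phi> \<circ> g) - \<phi> (\<Sum>i<n. e i * g i)"
      unfolding D_def s_def lin_comb_def
      by (simp add: P.hom_sum P.hom_mult P.hom_minus compat algebra_simps sum_subtractf)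
    then have "\<phi> D = \<phi> 0" using e by simp
    then have "D = 0" using iso DI Ic[of 0] by (auto simp: inj_on_def)
    moreover have "\<forall>i<n. aug (s i) = r i" using e unfolding s_def by (simp add: A.hom_minus aug_section Ic)
    ultimately show ?thesis unfolding relations_def lin_comb_def D_def by auto
  qed
  have lift: "\<exists>S. (\<forall>i<n. S i \<in> relations (*) {0} n g) \<and> (\<forall>i<n. \<forall>j<n. aug (S i j) = R i j)"
    if R: "\<forall>i<n. R i \<in> relations ?actL ?I2 n (\<phi> \<circ> g)" for R
  proof -
    have "\<forall>i. \<exists>s. i < n \<longrightarrow> s \<in> relations (*) {0} n g \<and> (\<forall>j<n. aug (s j) = R i j)"
      using R2 R by blast
    then show ?thesis by metis
  qed
  have detaug: "aug (det (mat n n (\<lambda>(i,j). S i j))) = det (mat n n (\<lambda>(i,j). aug (S i j)))" for S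
  proof -
    have "map_mat aug (mat n n (\<lambda>(i,j). S i j)) = mat n n (\<lambda>(i,j). aug (S i j))"
      by (rule eq_matI) auto
    then show ?thesis using A.hom_det[of "mat n n (\<lambda>(i,j). S i j)"] by simp
  qed
  let ?DH = "{det (mat n n (\<lambda>(i, j). rows i j)) |rows. \<forall>i<n. rows i \<in> relations (*) {0} n g}"
  let ?DL = "{det (mat n n (\<lambda>(i, j). rows i j)) |rows. \<forall>i<n. rows i \<in> relations ?actL ?I2 n (\<phi> \<circ> g)}"
  
  have part1: "aug ` fitting_wrt (*) {0} n g = fitting_wrt ?actL ?I2 n (\<phi> \<circ> g)"
  proof
    show "aug ` fitting_wrt (*) {0} n g \<subseteq> fitting_wrt ?actL ?I2 n (\<phi> \<circ> g)"
      unfolding fitting_wrt_def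
    proof (rule gi_hom_image[OF A.comm_ring_hom_axioms])
      fix d assume "d \<in> ?DH"
      then obtain S where d: "d = det (mat n n (\<lambda>(i, j). S i j))" and S: "\<forall>i<n. S i \<in> relations (*) {0} n g"
        by blast
      have "aug d \<in> ?DL" unfolding d detaug using S R1 by blast
      then show "aug d \<in> gen_ideal ?DL" by (rule gi_base)
    qed
  next
    show "fitting_wrt ?actL ?I2 n (\<phi> \<circ> g) \<subseteq> aug ` fitting_wrt (*) {0} n g"
      unfolding fitting_wrt_def
    proof (rule gi_least)
      show "0 \<in> aug ` gen_ideal ?DH"
      proof (rule image_eqI)
        show "0 = aug 0" by simp
        show "0 \<in> gen_ideal ?DH" by (rule gi_0)
      qed
      show "x + y \<in> aug ` gen_ideal ?DH" if "x \<in> aug ` gen_ideal ?DH" "y \<in> aug ` gen_ideal ?DH" for x y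
      proof -
        from that obtain X Y where X: "X \<in> gen_ideal ?DH" "x = aug X" and Y: "Y \<in> gen_ideal ?DH" "y = aug Y"
          by blast
        show ?thesis
        proof (rule image_eqI)
          show "x + y = aug (X + Y)" by (simp add: X(2) Y(2) A.hom_add)
          show "X + Y \<in> gen_ideal ?DH" by (rule gi_add[OF X(1) Y(1)])
        qed
      qed
      show "a * x \<in> aug ` gen_ideal ?DH" if "x \<in> aug ` gen_ideal ?DH" for a x
      proof -
        from that obtain X where X: "X \<in> gen_ideal ?DH" "x = aug X" by blast
        have "a * x = aug (LamH a * X)" by (simp add: X A.hom_mult aug_section)
        then show ?thesis using gi_mult[OF X(1)] by blast
      qed
      show "?DL \<subseteq> aug ` gen_ideal ?DH"
      proof
        fix d assume "d \<in> ?DL"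
        then obtain R where d: "d = det (mat n n (\<lambda>(i, j). R i j))" and R: "\<forall>i<n. R i \<in> relations ?actL ?I2 n (\<phi> \<circ> g)"
          by blast
        obtain S where S: "\<forall>i<n. S i \<in> relations (*) {0} n g" "\<forall>i<n. \<forall>j<n. aug (S i j) = R i j"
          using lift[OF R] by blast
        have "mat n n (\<lambda>(i,j). aug (S i j)) = mat n n (\<lambda>(i, j). R i j)"
          by (rule eq_matI) (auto simp: S(2))
        then have "d = aug (det (mat n n (\<lambda>(i,j). S i j)))" unfolding d detaug by simp
        moreover have "det (mat n n (\<lambda>(i,j). S i j)) \<in> gen_ideal ?DH" by (rule gi_base) (use S(1) in blast)
        ultimately show "d \<in> aug ` gen_ideal ?DH" by blast
      qed
    qed
  qed
  
  have part2: "fitting_wrt ?actL ?I2 n (\<phi> \<circ> g) \<subseteq> {\<xi> * l | l. True}"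
    unfolding fitting_wrt_def
  proof (rule gi_least)
    show "0 \<in> {\<xi> * l | l. True}" by (metis (mono_tags, lifting) mem_Collect_eq mult_zero_right)
    show "x + y \<in> {\<xi> * l | l. True}" if "x \<in> {\<xi> * l | l. True}" "y \<in> {\<xi> * l | l. True}" for x y
      using that by (auto simp: distrib_left[symmetric])
    show "a * x \<in> {\<xi> * l | l. True}" if "x \<in> {\<xi> * l | l. True}" for a x
      using that by (auto simp: mult.left_commute)
    show "?DL \<subseteq> {\<xi> * l | l. True}"
    proof
      fix d assume "d \<in> ?DL"
      then obtain R where d: "d = det (mat n n (\<lambda>(i, j). R i j))" and R: "\<forall>i<n. R i \<in> relations ?actL ?I2 n (\<phi> \<circ> g)"
        by blast
      obtain S where S: "\<forall>i<n. S i \<in> relations (*) {0} n g" "\<forall>i<n. \<forall>j<n. aug (S i j) = R i j"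
        using lift[OF R] by blast
      define S' where "S' = mat n n (\<lambda>(i,j). S i j)"
      define B where "B = map_mat \<phi> S'"
      have B: "B \<in> carrier_mat n n" unfolding B_def S'_def by simp
      define v where "v = vec n (\<lambda>j. \<phi> (g j))"
      have v: "v \<in> carrier_vec n" unfolding v_def by simp
      have Bv: "B *\<^sub>v v = 0\<^sub>v n"
      proof (rule eq_vecI)
        fix i assume "i < dim_vec (0\<^sub>v n :: 'b vec)"
        then have i: "i < n" by simp
        have "(B *\<^sub>v v) $ i = (\<Sum>j<n. \<phi> (S i j) * \<phi> (g j))"
          using i unfolding B_def S'_def v_def
          by (simp add: scalar_prod_def atLeast0LessThan)
        also have "\<dots> = \<phi> (\<Sum>j<n. S i j * g j)" by (simp add: P.hom_sum P.hom_mult)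
        also have "(\<Sum>j<n. S i j * g j) = 0" using S(1) i unfolding relations_def lin_comb_def by simp
        finally show "(B *\<^sub>v v) $ i = 0\<^sub>v n $ i" using i by simp
      qed (use B in simp)
      have "det B \<cdot>\<^sub>v v = (det B \<cdot>\<^sub>m 1\<^sub>m n) *\<^sub>v v" using v by auto
      also have "\<dots> = (adj_mat B * B) *\<^sub>v v" using adj_mat[OF B] by simp
      also have "\<dots> = adj_mat B *\<^sub>v (B *\<^sub>v v)" using adj_mat[OF B] B v by (metis assoc_mult_mat_vec)
      also have "\<dots> = 0\<^sub>v n" unfolding Bv using adj_mat[OF B] by (intro eq_vecI) auto
      finally have dv: "det B \<cdot>\<^sub>v v = 0\<^sub>v n" .
      have dg: "det B * \<phi> (g j) = 0" if j: "j < n" for j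
        using arg_cong[OF dv, of "\<lambda>w. w $ j"] j v unfolding v_def by simp
      have "det B = 0"
      proof (rule faithful, intro ballI)
        fix x assume "x \<in> I"
        then obtain X where X: "X \<in> Ical" "x = \<phi> X" unfolding I_def by blast
        obtain c where c: "X = (\<Sum>i<n. c i * g i)" using gexp[OF X(1)] by blast
        have "det B * x = (\<Sum>i<n. \<phi> (c i) * (det B * \<phi> (g i)))"
          unfolding X(2) c by (simp add: P.hom_sum P.hom_mult sum_distrib_left algebra_simps)
        also have "\<dots> = 0" using dg by simp
        finally show "det B * x = 0" .
      qed
      then have phiS: "\<phi> (det S') = 0" unfolding B_def using P.hom_det by simp
      have "mat n n (\<lambda>(i,j). aug (S i j)) = mat n n (\<lambda>(i, j). R i j)"
        by (rule eq_matI) (auto simp: S(2))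
      then have augS: "aug (det S') = d" unfolding d S'_def detaug by simp
      have "Lamh d = \<phi> (- (det S' - LamH (aug (det S'))))"
        by (simp add: P.hom_uminus P.hom_minus phiS compat augS)
      moreover have "- (det S' - LamH (aug (det S'))) \<in> Ical" using Ic_mul[OF Ic_sec, of "-1"] by simp
      ultimately have "Lamh d \<in> I" unfolding I_def by blast
      then have "\<xi> dvd d" using quot_h by simp
      then show "d \<in> {\<xi> * l | l. True}" by (auto elim!: dvdE)
    qed
  qed
  show ?thesis unfolding FH FL using part1 part2 by simp
qed


end
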